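(* Let $\mathcal{X}=(\mathbf{x}_n)_{n=1}^\infty$ be a spreading sequence in a quasi-Banach space $\mathbb{X}$. If $\mathcal{X}$ is not constant, then it is uniformly separated, i.e. $\inf\{\|\mathbf{x}_n-\mathbf{x}_k\|\colon n,k\in\mathbb{N},\ n\ne k\}>0$.
   Context: For a sequence $(\mathbf{x}_n)$ in $\mathbb{X}$, $\mathcal{N}\subseteq\mathbb{N}$ and an injective $\psi\colon\mathcal{N}\to\mathbb{N}$, $\psi$ is a translation if the assignment $\mathbf{x}_n\mapsto\mathbf{x}_{\psi(n)}$, $n\in\mathcal{N}$, defines a linear map on $\operatorname{span}(\mathbf{x}_n\colon n\in\mathcal{N})$ extending to an isomorphism $T_\psi$ from the closed linear span of $\{\mathbf{x}_n\colon n\in\mathcal{N}\}$ onto the closed linear span of $\{\mathbf{x}_n\colon n\in\psi(\mathcal{N})\}$. The sequence is spreading if every increasing map $\psi\colon\mathbb{N}\to\mathbb{N}$ is a translation. *)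

theory Defs
  imports "HOL-Analysis.Analysis"
begin

definition quasi_norm :: "('a::real_vector \<Rightarrow> real) \<Rightarrow> bool" where
  "quasi_norm q \<longleftrightarrow>
     (\<forall>x. 0 \<le> q x) \<and> (\<forall>x. q x = 0 \<longleftrightarrow> x = 0) \<and>
     (\<forall>c x. q (c *\<^sub>R x) = \<bar>c\<bar> * q x) \<and>
     (\<exists>\<kappa>\<ge>1. \<forall>x y. q (x + y) \<le> \<kappa> * (q x + q y))"

definition quasi_banach :: "('a::real_vector \<Rightarrow> real) \<Rightarrow> bool" where
  "quasi_banach q \<longleftrightarrow> quasi_norm q \<and>
     (\<forall>u::nat \<Rightarrow> 'a. (\<forall>\<epsilon>>0. \<exists>N. \<forall>m\<ge>N. \<forall>n\<ge>N. q (u m - u n) < \<epsilon>)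
        \<longrightarrow> (\<exists>l. \<forall>\<epsilon>>0. \<exists>N. \<forall>n\<ge>N. q (u n - l) < \<epsilon>))"

definition qclosure :: "('a::real_vector \<Rightarrow> real) \<Rightarrow> 'a set \<Rightarrow> 'a set" where
  "qclosure q S = {x. \<forall>\<epsilon>>0. \<exists>s\<in>S. q (x - s) < \<epsilon>}"

definition qclosed_span :: "('a::real_vector \<Rightarrow> real) \<Rightarrow> 'a set \<Rightarrow> 'a set" where
  "qclosed_span q S = qclosure q (span S)"

definition q_isomorphism_on ::
  "('a::real_vector \<Rightarrow> real) \<Rightarrow> ('a \<Rightarrow> 'a) \<Rightarrow> 'a set \<Rightarrow> 'a set \<Rightarrow> bool" where
  "q_isomorphism_on q T A B \<longleftrightarrow>
     (\<forall>x\<in>A. \<forall>y\<in>A. T (x + y) = T x + T y) \<and>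
     (\<forall>c. \<forall>x\<in>A. T (c *\<^sub>R x) = c *\<^sub>R T x) \<and>
     inj_on T A \<and> T ` A = B \<and>
     (\<exists>C. \<forall>x\<in>A. q (T x) \<le> C * q x) \<and>
     (\<exists>C. \<forall>x\<in>A. q x \<le> C * q (T x))"

definition translation ::
  "('a::real_vector \<Rightarrow> real) \<Rightarrow> (nat \<Rightarrow> 'a) \<Rightarrow> nat set \<Rightarrow> (nat \<Rightarrow> nat) \<Rightarrow> bool" where
  "translation q x N \<psi> \<longleftrightarrow> inj_on \<psi> N \<and>
     (\<exists>T. (\<forall>n\<in>N. T (x n) = x (\<psi> n)) \<and>
          q_isomorphism_on q T (qclosed_span q (x ` N)) (qclosed_span q (x ` \<psi> ` N)))"

definition spreading :: "('a::real_vector \<Rightarrow> real) \<Rightarrow> (nat \<Rightarrow> 'a) \<Rightarrow> bool" where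
  "spreading q x \<longleftrightarrow> (\<forall>\<psi>. strict_mono \<psi> \<longrightarrow> translation q x UNIV \<psi>)"

end

theory Submission
  imports Defs
begin

lemma qn_props:
  assumes "quasi_norm q"
  shows "q 0 = 0" "\<And>v. 0 \<le> q v" "\<And>v. q v = 0 \<longleftrightarrow> v = 0" "\<And>v. q (- v) = q v"
proof -
  show "q 0 = 0" "\<And>v. 0 \<le> q v" "\<And>v. q v = 0 \<longleftrightarrow> v = 0" using assms unfolding quasi_norm_def by auto
  fix v
  have "q ((-1) *\<^sub>R v) = \<bar>-1\<bar> * q v" using assms unfolding quasi_norm_def by blast
  then show "q (- v) = q v" by simp
qed

lemma span_sub:
  assumes "quasi_norm q"
  shows "span S \<subseteq> qclosed_span q S"
  unfolding qclosed_span_def qclosure_def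
proof
  fix y assume "y \<in> span S"
  then show "y \<in> {x. \<forall>\<epsilon>>0. \<exists>s\<in>span S. q (x - s) < \<epsilon>}"
    using qn_props(1)[OF assms] by force
qed

lemma trans_bounds:
  assumes qn: "quasi_norm q" and tr: "translation q x UNIV \<psi>"
  shows "\<exists>C D. (\<forall>a b. q (x a - x b) \<le> C * q (x (\<psi> a) - x (\<psi> b))) \<and>
                (\<forall>a b. q (x (\<psi> a) - x (\<psi> b)) \<le> D * q (x a - x b))"
proof -
  obtain T where T1: "\<forall>n. T (x n) = x (\<psi> n)"
    and iso: "q_isomorphism_on q T (qclosed_span q (x ` UNIV)) (qclosed_span q (x ` \<psi> ` UNIV))"
    using tr unfolding translation_def by blast
  let ?A = "qclosed_span q (range x)"
  have add: "\<forall>u\<in>?A. \<forall>v\<in>?A. T (u + v) = T u + T v"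
    and sc: "\<forall>c. \<forall>u\<in>?A. T (c *\<^sub>R u) = c *\<^sub>R T u"
    using iso unfolding q_isomorphism_on_def by auto
  obtain C where C: "\<forall>u\<in>?A. q u \<le> C * q (T u)" using iso unfolding q_isomorphism_on_def by auto
  obtain D where D: "\<forall>u\<in>?A. q (T u) \<le> D * q u" using iso unfolding q_isomorphism_on_def by auto
  have inA: "v \<in> ?A" if "v \<in> span (range x)" for v using span_sub[OF qn] that by blast
  have lin: "T (x a - x b) = x (\<psi> a) - x (\<psi> b)" and dA: "x a - x b \<in> ?A" for a b
  proof -
    have xa: "x a \<in> span (range x)" "x b \<in> span (range x)" by (auto intro: span_base)
    then have mb: "(-1) *\<^sub>R x b \<in> span (range x)" by (simp add: span_neg)
    have "T (x a - x b) = T (x a + (-1) *\<^sub>R x b)" by simp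
    also have "\<dots> = T (x a) + T ((-1) *\<^sub>R x b)" using add inA xa mb by blast
    also have "\<dots> = x (\<psi> a) + (-1) *\<^sub>R T (x b)" using sc inA xa T1 by metis
    also have "\<dots> = x (\<psi> a) - x (\<psi> b)" using T1 by simp
    finally show "T (x a - x b) = x (\<psi> a) - x (\<psi> b)" .
    show "x a - x b \<in> ?A" using inA xa by (simp add: span_diff)
  qed
  show ?thesis
    apply (rule exI[of _ C], rule exI[of _ D])
    using C D lin dA by metis
qed

lemma shift_strict: "strict_mono (\<lambda>j. j + (s::nat))"
  by (simp add: strict_mono_def)

theorem lemma2p3:
  fixes q :: "'a::real_vector \<Rightarrow> real" and x :: "nat \<Rightarrow> 'a"
  assumes "quasi_banach q"
    and "spreading q x"
    and "\<exists>n k. x n \<noteq> x k"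
  shows "Inf {q (x n - x k) | n k. n \<noteq> k} > 0"
proof -
  have qn: "quasi_norm q" using assms(1) unfolding quasi_banach_def by blast
  note qp = qn_props[OF qn]
  have trb: "\<exists>C D. (\<forall>a b. q (x a - x b) \<le> C * q (x (\<psi> a) - x (\<psi> b))) \<and>
                (\<forall>a b. q (x (\<psi> a) - x (\<psi> b)) \<le> D * q (x a - x b))" if "strict_mono \<psi>" for \<psi>
    using trans_bounds[OF qn] assms(2) that unfolding spreading_def by blast
  have step: "x n \<noteq> x (Suc n)" for n
  proof
    assume eq: "x n = x (Suc n)"
    have all: "x m = x (Suc m)" for m
    proof (cases "n \<le> m")
      case True
      obtain C D where D: "\<forall>a b. q (x (a + (m - n)) - x (b + (m - n))) \<le> D * q (x a - x b)"
        using trb[OF shift_strict[of "m - n"]] by blast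
      have "q (x (n + (m - n)) - x (Suc n + (m - n))) \<le> D * q (x n - x (Suc n))" using D by blast
      then have "q (x m - x (Suc m)) \<le> 0" using True eq qp by simp
      then show ?thesis using qp(2,3)[of "x m - x (Suc m)"] by simp
    next
      case False
      obtain C D where C: "\<forall>a b. q (x a - x b) \<le> C * q (x (a + (n - m)) - x (b + (n - m)))"
        using trb[OF shift_strict[of "n - m"]] by blast
      have "q (x m - x (Suc m)) \<le> C * q (x (m + (n - m)) - x (Suc m + (n - m)))" using C by blast
      then have "q (x m - x (Suc m)) \<le> 0" using False eq qp by simp
      then show ?thesis using qp(2,3)[of "x m - x (Suc m)"] by simp
    qed
    have "x m = x 0" for m by (induction m) (use all in auto)
    then show False using assms(3) by metis
  qed
  define S where "S = {q (x n - x k) | n k. n \<noteq> k}"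
  show ?thesis
  proof (rule ccontr)
    assume "\<not> ?thesis"
    then have I0: "Inf S \<le> 0" unfolding S_def by simp
    have Sne: "S \<noteq> {}" unfolding S_def by blast
    have Sbdd: "bdd_below S" unfolding S_def using qp(2) by (auto intro!: bdd_belowI[of _ 0])
    have small: "\<exists>n k. n \<noteq> k \<and> q (x n - x k) < e" if "e > 0" for e
    proof -
      have "Inf S < e" using I0 that by simp
      then obtain s where "s \<in> S" "s < e" using cInf_less_iff[OF Sne Sbdd] by blast
      then show ?thesis unfolding S_def by blast
    qed
    have far: "\<exists>a b. N \<le> a \<and> a < b \<and> q (x a - x b) < e" if "e > 0" for e N
    proof -
      obtain C D where D: "\<forall>a b. q (x (a + N) - x (b + N)) \<le> D * q (x a - x b)"
        using trb[OF shift_strict[of N]] by blast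
      have "e / (\<bar>D\<bar> + 1) > 0" using that by simp
      then obtain n k where nk: "n \<noteq> k" "q (x n - x k) < e / (\<bar>D\<bar> + 1)" using small by blast
      have "\<exists>a b. a < b \<and> q (x a - x b) < e / (\<bar>D\<bar> + 1)"
      proof (cases "n < k")
        case True then show ?thesis using nk by blast
      next
        case False
        then have "k < n" using nk by simp
        moreover have "q (x k - x n) = q (x n - x k)" using qp(4)[of "x n - x k"] by simp
        ultimately show ?thesis using nk by metis
      qed
      then obtain a b where ab: "a < b" "q (x a - x b) < e / (\<bar>D\<bar> + 1)" by blast
      have "q (x (a + N) - x (b + N)) \<le> D * q (x a - x b)" using D by blast
      also have "\<dots> \<le> \<bar>D\<bar> * q (x a - x b)" using qp(2)[of "x a - x b"]
        by (simp add: mult_right_mono)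
      also have "\<dots> \<le> \<bar>D\<bar> * (e / (\<bar>D\<bar> + 1))" using ab(2) by (intro mult_left_mono) simp_all
      also have "\<dots> < e" using that by (simp add: field_simps)
      finally show ?thesis using ab(1) by (intro exI[of _ "a + N"] exI[of _ "b + N"]) simp
    qed
    define e where "e j = q (x (2 * j) - x (Suc (2 * j))) / (real j + 1)" for j
    have epos: "e j > 0" for j
      using step[of "2 * j"] qp(2,3)[of "x (2 * j) - x (Suc (2 * j))"] unfolding e_def
      by (simp add: less_le)
    define nxt where "nxt N j = (SOME p. N \<le> fst p \<and> fst p < snd p \<and> q (x (fst p) - x (snd p)) < e j)" for N j
    have nxt: "N \<le> fst (nxt N j) \<and> fst (nxt N j) < snd (nxt N j) \<and> q (x (fst (nxt N j)) - x (snd (nxt N j))) < e j" for N j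
    proof -
      obtain a b where "N \<le> a \<and> a < b \<and> q (x a - x b) < e j" using far[OF epos] by blast
      then have "\<exists>p. N \<le> fst p \<and> fst p < snd p \<and> q (x (fst p) - x (snd p)) < e j" by (intro exI[of _ "(a, b)"]) simp
      then show ?thesis unfolding nxt_def by (rule someI_ex)
    qed
    define P where "P = rec_nat (nxt 0 0) (\<lambda>j p. nxt (Suc (snd p)) (Suc j))"
    have P0: "P 0 = nxt 0 0" and PS: "P (Suc j) = nxt (Suc (snd (P j))) (Suc j)" for j
      unfolding P_def by simp_all
    have Pp: "fst (P j) < snd (P j) \<and> q (x (fst (P j)) - x (snd (P j))) < e j" for j
      by (cases j) (use nxt P0 PS in auto)
    have Pn: "snd (P j) < fst (P (Suc j))" for j using nxt[of "Suc (snd (P j))" "Suc j"] PS by simp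
    define \<psi> where "\<psi> i = (if even i then fst (P (i div 2)) else snd (P (i div 2)))" for i
    have sm: "strict_mono \<psi>"
    proof (rule strict_monoI_Suc)
      fix i
      show "\<psi> i < \<psi> (Suc i)"
      proof (cases "even i")
        case True
        then have "Suc i div 2 = i div 2" by presburger
        then show ?thesis using True Pp unfolding \<psi>_def by simp
      next
        case False
        then have "Suc i div 2 = Suc (i div 2)" by presburger
        then show ?thesis using False Pn unfolding \<psi>_def by simp
      qed
    qed
    obtain C D where C: "\<forall>a b. q (x a - x b) \<le> C * q (x (\<psi> a) - x (\<psi> b))"
      using trb[OF sm] by blast
    define j where "j = nat \<lceil>C\<rceil>"
    have pj: "\<psi> (2 * j) = fst (P j)" "\<psi> (Suc (2 * j)) = snd (P j)" unfolding \<psi>_def by simp_all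
    let ?d = "q (x (2 * j) - x (Suc (2 * j)))"
    have dpos: "?d > 0" using epos[of j] unfolding e_def by (simp add: divide_pos_pos zero_less_divide_iff)
    have "?d \<le> C * q (x (fst (P j)) - x (snd (P j)))" using C pj by metis
    moreover have Cpos: "C > 0"
    proof (rule ccontr)
      assume "\<not> C > 0"
      then have "C * q (x (fst (P j)) - x (snd (P j))) \<le> 0" using qp(2) by (simp add: mult_nonpos_nonneg)
      then show False using dpos \<open>?d \<le> C * q (x (fst (P j)) - x (snd (P j)))\<close> by simp
    qed
    ultimately have "?d < C * e j" using Pp[of j] by (smt (verit) mult_strict_left_mono)
    also have "\<dots> = ?d * (C / (real j + 1))" unfolding e_def by simp
    also have "\<dots> \<le> ?d * 1"
    proof -
      have "C \<le> real j" unfolding j_def by linarith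
      then have "C / (real j + 1) \<le> 1" by simp
      then show ?thesis using dpos by (intro mult_left_mono) simp_all
    qed
    finally show False by simp
  qed
qed

end
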